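(* Let $2<p<\infty$ and $\alpha\in\mathbb R$, or $p=2$ and $\alpha\ge0$. There is $C>0$ such that for all $N\ge1$, $$\sup_{A\subset\mathbb Z,\ |A|\le N}\|S_A\|_{L^p(\log L)^\alpha\to L^p(\log L)^\alpha}\le C\,N^{\frac12-\frac1p}(\log(e+N))^\alpha.$$
   Context: On $\mathbb T\equiv[-\pi,\pi)$: $L^p(\log L)^\alpha(\mathbb T)$ is the Orlicz space $L^\Phi$, $\Phi(t)=\int_0^ts^{p-1}(\log(c+s))^{\alpha p}ds$ ($c>1$ fixed, large enough that $\Phi$ is a Young function), Luxemburg norm. For finite $A\subset\mathbb Z$, $S_A(g)=\sum_{n\in A}\hat g(n)e^{inx}$, where $\hat g(n)$ are the Fourier coefficients of $g\in L^1(\mathbb T)$. *)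

theory Defs
  imports "HOL-Analysis.Analysis"
begin

definition torus :: "real set" where
  "torus = {-pi..<pi}"

definition LlogL_Phi :: "real \<Rightarrow> real \<Rightarrow> real \<Rightarrow> real \<Rightarrow> real" where
  "LlogL_Phi p \<alpha> c t = integral {0..t} (\<lambda>s. s powr (p - 1) * (ln (c + s)) powr (\<alpha> * p))"

definition young_function :: "(real \<Rightarrow> real) \<Rightarrow> bool" where
  "young_function \<Phi> \<longleftrightarrow> convex_on {0..} \<Phi> \<and> \<Phi> 0 = 0 \<and> (\<forall>t>0. \<Phi> t > 0)
     \<and> filterlim \<Phi> at_top at_top"

definition orlicz_modular :: "(real \<Rightarrow> real) \<Rightarrow> (real \<Rightarrow> complex) \<Rightarrow> real \<Rightarrow> ennreal" where
  "orlicz_modular \<Phi> f lam = (\<integral>\<^sup>+ x. ennreal (\<Phi> (cmod (f x) / lam)) \<partial>(lebesgue_on torus))"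

definition orlicz_space :: "(real \<Rightarrow> real) \<Rightarrow> (real \<Rightarrow> complex) set" where
  "orlicz_space \<Phi> = {f. f \<in> borel_measurable (lebesgue_on torus) \<and>
      (\<exists>lam>0. orlicz_modular \<Phi> f lam < \<infinity>)}"

definition luxemburg_norm :: "(real \<Rightarrow> real) \<Rightarrow> (real \<Rightarrow> complex) \<Rightarrow> real" where
  "luxemburg_norm \<Phi> f = Inf {lam. lam > 0 \<and> orlicz_modular \<Phi> f lam \<le> 1}"

definition fourier_coeff :: "(real \<Rightarrow> complex) \<Rightarrow> int \<Rightarrow> complex" where
  "fourier_coeff g n = (1 / (2 * pi)) *
     (LINT x | lebesgue_on torus. g x * exp (- (\<i> * of_int n * of_real x)))"

definition fourier_proj :: "int set \<Rightarrow> (real \<Rightarrow> complex) \<Rightarrow> real \<Rightarrow> complex" where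
  "fourier_proj A g x = (\<Sum>n\<in>A. fourier_coeff g n * exp (\<i> * of_int n * of_real x))"

end

theory Submission
  imports Defs
begin


lemma torus_sets[simp]: "torus \<in> sets lebesgue"
  unfolding torus_def by simp

lemma emeasure_torus: "emeasure lebesgue torus = ennreal (2*pi)"
  unfolding torus_def by simp

lemma finite_measure_torus: "finite_measure (lebesgue_on torus)"
  by (rule finite_measureI) (simp add: emeasure_restrict_space emeasure_torus)

lemma integrable_torus_iff: "integrable (lebesgue_on torus) f \<longleftrightarrow> set_integrable lebesgue torus f"
  for f :: "real \<Rightarrow> 'b::{banach, second_countable_topology}"
  by (simp add: integrable_restrict_space set_integrable_def)

lemma cont_integral_torus:
  fixes f :: "real \<Rightarrow> complex"
  assumes "continuous_on {-pi..pi} f"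
  shows "integrable (lebesgue_on torus) f"
    and "(LINT x|lebesgue_on torus. f x) = integral {-pi..pi} f"
proof -
  have "integrable (lebesgue_on {-pi..pi}) f"
    using assms by (rule continuous_imp_integrable_real)
  then have "set_integrable lebesgue {-pi..pi} f"
    by (simp add: integrable_restrict_space set_integrable_def)
  then have "set_integrable lebesgue torus f"
    by (rule set_integrable_subset) (auto simp: torus_def)
  then show i: "integrable (lebesgue_on torus) f" by (simp add: integrable_torus_iff)
  have "(LINT x|lebesgue_on torus. f x) = integral torus f"
    by (rule lebesgue_integral_eq_integral[OF i]) simp
  also have "\<dots> = integral {-pi..pi} f"
    by (rule integral_spike_set) (auto simp: torus_def intro: negligible_subset[of "{pi}"])
  finally show "(LINT x|lebesgue_on torus. f x) = integral {-pi..pi} f" .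
qed



definition ee :: "int \<Rightarrow> real \<Rightarrow> complex" where
  "ee n x = exp (\<i> * of_int n * of_real x)"

lemma ee_cont[continuous_intros]: "continuous_on S (ee n)"
  unfolding ee_def by (intro continuous_intros)

lemma ee_norm[simp]: "norm (ee n x) = 1"
  unfolding ee_def by (simp add: norm_exp_eq_Re)

lemma ee_mult_cnj: "ee n x * cnj (ee m x) = ee (n - m) x"
proof -
  have "cnj (ee m x) = exp (- (\<i> * of_int m * of_real x))"
    unfolding ee_def by (simp add: exp_cnj)
  then show ?thesis unfolding ee_def by (simp add: exp_add[symmetric] algebra_simps)
qed

lemma ee_pi: "ee k pi = ee k (-pi)"
proof -
  have "ee k pi = exp (\<i> * of_int k * of_real (-pi) + \<i> * (of_int k * (of_real pi * 2)))"
    unfolding ee_def by (simp add: algebra_simps)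
  also have "\<dots> = ee k (-pi)" unfolding ee_def by (rule exp_plus_2pin)
  finally show ?thesis .
qed

lemma integral_ee: "integral {-pi..pi} (ee k) = (if k = 0 then 2 * pi else 0)"
proof (cases "k = 0")
  case True
  have "ee 0 = (\<lambda>_. 1)" by (simp add: ee_def fun_eq_iff)
  then show ?thesis using True by (simp add: scaleR_conv_of_real)
next
  case False
  have "((ee k) has_integral (ee k pi / (\<i> * of_int k) - ee k (-pi) / (\<i> * of_int k))) {-pi..pi}"
  proof (rule fundamental_theorem_of_calculus)
    show "- pi \<le> pi" by simp
    fix x :: real
    have "((\<lambda>z. exp (\<i> * of_int k * z) / (\<i> * of_int k)) has_field_derivative ee k x) (at (of_real x))"
      unfolding ee_def using False
      by (auto intro!: derivative_eq_intros simp: field_simps)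
    from has_vector_derivative_real_field[OF this]
    show "((\<lambda>x. ee k x / (\<i> * of_int k)) has_vector_derivative ee k x) (at x within {-pi..pi})"
      by (simp add: ee_def)
  qed
  then show ?thesis using False by (simp add: ee_pi integral_unique)
qed

lemma torus_ee: "integrable (lebesgue_on torus) (ee k)"
   "(LINT x|lebesgue_on torus. ee k x) = (if k = 0 then 2 * pi else 0)"
  using cont_integral_torus[of "ee k"] ee_cont[of "{-pi..pi}" k] by (simp_all add: integral_ee)



abbreviation "MT \<equiv> lebesgue_on torus"

lemma trig_L2:
  fixes a :: "int \<Rightarrow> complex" assumes A: "finite A"
  shows "integrable MT (\<lambda>x. (cmod (\<Sum>n\<in>A. a n * ee n x))\<^sup>2)"
    and "(LINT x|MT. (cmod (\<Sum>n\<in>A. a n * ee n x))\<^sup>2) = 2*pi*(\<Sum>n\<in>A. (cmod (a n))\<^sup>2)"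
proof -
  define P where "P = (\<lambda>x. \<Sum>n\<in>A. a n * ee n x)"
  have eq: "complex_of_real ((cmod (P x))\<^sup>2) = (\<Sum>n\<in>A. \<Sum>m\<in>A. a n * cnj (a m) * ee (n - m) x)" for x
  proof -
    have "complex_of_real ((cmod (P x))\<^sup>2) = P x * cnj (P x)" by (rule complex_norm_square)
    also have "\<dots> = (\<Sum>n\<in>A. \<Sum>m\<in>A. (a n * ee n x) * cnj (a m * ee m x))"
      unfolding P_def cnj_sum sum_product by simp
    also have "\<dots> = (\<Sum>n\<in>A. \<Sum>m\<in>A. a n * cnj (a m) * ee (n - m) x)"
      by (intro sum.cong refl) (simp add: ee_mult_cnj[symmetric] mult_ac)
    finally show ?thesis .
  qed
  have int: "integrable MT (\<lambda>x. \<Sum>n\<in>A. \<Sum>m\<in>A. a n * cnj (a m) * ee (n - m) x)"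
    using torus_ee(1) by auto
  then have "complex_integrable MT (\<lambda>x. complex_of_real ((cmod (P x))\<^sup>2))"
    by (simp only: eq)
  then show "integrable MT (\<lambda>x. (cmod (\<Sum>n\<in>A. a n * ee n x))\<^sup>2)"
    unfolding P_def complex_of_real_integrable_eq .
  have "complex_of_real (LINT x|MT. (cmod (P x))\<^sup>2) = (LINT x|MT. complex_of_real ((cmod (P x))\<^sup>2))"
    by (rule integral_complex_of_real[symmetric])
  also have "\<dots> = (LINT x|MT. (\<Sum>n\<in>A. \<Sum>m\<in>A. a n * cnj (a m) * ee (n - m) x))"
    by (simp only: eq)
  also have "\<dots> = (\<Sum>n\<in>A. \<Sum>m\<in>A. a n * cnj (a m) * (if n - m = 0 then 2*pi else 0))"
    using torus_ee by (simp add: integral_sum integrable_sum)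
  also have "\<dots> = (\<Sum>n\<in>A. a n * cnj (a n) * 2 * pi)"
    using A by (simp add: if_distrib mult_ac cong: if_cong)
  also have "\<dots> = complex_of_real (2*pi*(\<Sum>n\<in>A. (cmod (a n))\<^sup>2))"
  proof -
    have "a n * cnj (a n) = complex_of_real ((cmod (a n))\<^sup>2)" for n
      by (rule complex_norm_square[symmetric])
    then show ?thesis by (simp add: sum_distrib_left mult_ac del: of_real_power)
  qed
  finally show "(LINT x|MT. (cmod (\<Sum>n\<in>A. a n * ee n x))\<^sup>2) = 2*pi*(\<Sum>n\<in>A. (cmod (a n))\<^sup>2)"
    unfolding P_def of_real_eq_iff .
qed



lemma cnj_ee: "cnj (ee n x) = exp (- (\<i> * of_int n * of_real x))"
  unfolding ee_def by (simp add: exp_cnj)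

lemma fourier_coeff_ee: "fourier_coeff g n = (1/(2*pi)) * (LINT x|MT. g x * cnj (ee n x))"
  unfolding fourier_coeff_def cnj_ee by simp

lemma fourier_proj_ee: "fourier_proj A g x = (\<Sum>n\<in>A. fourier_coeff g n * ee n x)"
  unfolding fourier_proj_def ee_def by simp

lemma ee_meas[measurable]: "ee n \<in> borel_measurable MT"
  using torus_ee(1) by (rule borel_measurable_integrable)

lemma cnj_ee': "cnj (ee n x) = ee (-n) x"
  unfolding ee_def by (simp add: exp_cnj)

lemma cmod_diff_sq: "(cmod (a - b))\<^sup>2 = (cmod a)\<^sup>2 + (cmod b)\<^sup>2 - 2 * Re (a * cnj b)"
  unfolding cmod_power2 by (simp add: power2_eq_square algebra_simps)

lemma le_one_plus_sq: "(t::real) \<le> 1 + t\<^sup>2"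
proof -
  have "0 \<le> (t - 1)\<^sup>2" by simp
  then have "2 * t \<le> 1 + t\<^sup>2" by (simp add: power2_eq_square algebra_simps)
  moreover have "0 \<le> t\<^sup>2" by simp
  ultimately show ?thesis by linarith
qed

lemma sq_integrable_imp_integrable:
  fixes g :: "real \<Rightarrow> complex"
  assumes meas: "g \<in> borel_measurable MT" and sq: "integrable MT (\<lambda>x. (cmod (g x))\<^sup>2)"
  shows "integrable MT g"
proof (rule Bochner_Integration.integrable_bound[where f="\<lambda>x. 1 + (cmod (g x))\<^sup>2"])
  have "emeasure MT (space MT) < \<infinity>"
    by (simp add: emeasure_restrict_space emeasure_torus)
  then show "integrable MT (\<lambda>x. 1 + (cmod (g x))\<^sup>2)"
    using sq by (intro Bochner_Integration.integrable_add finite_measure.integrable_const[OF finite_measure_torus]) auto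
  show "g \<in> borel_measurable MT" by fact
  show "AE x in MT. norm (g x) \<le> norm (1 + (cmod (g x))\<^sup>2)"
  proof (rule AE_I2)
    fix x
    have "cmod (g x) \<le> 1 + (cmod (g x))\<^sup>2"
      by (rule le_one_plus_sq)
    then show "norm (g x) \<le> norm (1 + (cmod (g x))\<^sup>2)" by simp
  qed
qed

lemma bessel:
  fixes g :: "real \<Rightarrow> complex"
  assumes meas: "g \<in> borel_measurable MT" and sq: "integrable MT (\<lambda>x. (cmod (g x))\<^sup>2)"
    and A: "finite A"
  shows "2*pi*(\<Sum>n\<in>A. (cmod (fourier_coeff g n))\<^sup>2) \<le> (LINT x|MT. (cmod (g x))\<^sup>2)"
proof -
  define a where "a = fourier_coeff g"
  define P where "P = (\<lambda>x. \<Sum>n\<in>A. a n * ee n x)"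
  define s where "s = (\<Sum>n\<in>A. (cmod (a n))\<^sup>2)"
  have ig: "integrable MT g" using sq_integrable_imp_integrable[OF meas sq] .
  have ign: "integrable MT (\<lambda>x. g x * cnj (ee n x))" for n
  proof (rule Bochner_Integration.integrable_bound[OF ig])
    show "(\<lambda>x. g x * cnj (ee n x)) \<in> borel_measurable MT"
      unfolding cnj_ee' by (intro borel_measurable_times meas ee_meas)
  qed (simp add: norm_mult)
  have gP: "(\<lambda>x. g x * cnj (P x)) = (\<lambda>x. \<Sum>n\<in>A. cnj (a n) * (g x * cnj (ee n x)))"
    unfolding P_def cnj_sum by (auto simp: sum_distrib_left mult_ac)
  have igP: "integrable MT (\<lambda>x. g x * cnj (P x))"
    unfolding gP using ign by auto
  have "(LINT x|MT. g x * cnj (P x)) = (\<Sum>n\<in>A. cnj (a n) * (LINT x|MT. g x * cnj (ee n x)))"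
    unfolding gP using ign by (simp add: integral_sum)
  also have "\<dots> = (\<Sum>n\<in>A. cnj (a n) * (2 * pi * a n))"
    unfolding a_def fourier_coeff_ee by simp
  also have "\<dots> = complex_of_real (2 * pi * s)"
  proof -
    have "cnj (a n) * (2 * pi * a n) = complex_of_real (2 * pi * (cmod (a n))\<^sup>2)" for n
    proof -
      have "cnj (a n) * (2 * pi * a n) = complex_of_real (2 * pi) * (a n * cnj (a n))"
        by (simp add: mult_ac)
      also have "\<dots> = complex_of_real (2 * pi * (cmod (a n))\<^sup>2)"
        by (simp only: complex_norm_square[symmetric] of_real_mult)
      finally show ?thesis .
    qed
    then show ?thesis unfolding s_def
      by (simp only: sum_distrib_left of_real_sum)
  qed
  finally have IgP: "(LINT x|MT. g x * cnj (P x)) = complex_of_real (2 * pi * s)" .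
  have iP: "integrable MT (\<lambda>x. (cmod (P x))\<^sup>2)" and IP: "(LINT x|MT. (cmod (P x))\<^sup>2) = 2 * pi * s"
    unfolding P_def s_def using trig_L2[OF A] by auto
  have iRe: "integrable MT (\<lambda>x. Re (g x * cnj (P x)))" by (rule integrable_Re[OF igP])
  have "0 \<le> (LINT x|MT. (cmod (g x - P x))\<^sup>2)"
    by (rule integral_nonneg_AE) auto
  also have "\<dots> = (LINT x|MT. (cmod (g x))\<^sup>2 + (cmod (P x))\<^sup>2 - 2 * Re (g x * cnj (P x)))"
    by (simp add: cmod_diff_sq)
  also have "\<dots> = (LINT x|MT. (cmod (g x))\<^sup>2) + 2 * pi * s - 2 * Re (LINT x|MT. g x * cnj (P x))"
  proof -
    have "(LINT x|MT. (cmod (g x))\<^sup>2 + (cmod (P x))\<^sup>2 - 2 * Re (g x * cnj (P x)))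
       = (LINT x|MT. (cmod (g x))\<^sup>2 + (cmod (P x))\<^sup>2) - (LINT x|MT. 2 * Re (g x * cnj (P x)))"
      by (intro Bochner_Integration.integral_diff Bochner_Integration.integrable_add integrable_mult_right sq iP iRe)
    also have "(LINT x|MT. (cmod (g x))\<^sup>2 + (cmod (P x))\<^sup>2) = (LINT x|MT. (cmod (g x))\<^sup>2) + 2 * pi * s"
      by (simp only: Bochner_Integration.integral_add[OF sq iP] IP)
    also have "(LINT x|MT. 2 * Re (g x * cnj (P x))) = 2 * Re (LINT x|MT. g x * cnj (P x))"
      by (simp only: integral_mult_right_zero integral_Re[OF igP])
    finally show ?thesis .
  qed
  also have "\<dots> = (LINT x|MT. (cmod (g x))\<^sup>2) - 2 * pi * s"
    by (simp add: IgP)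
  finally show ?thesis unfolding s_def a_def by simp
qed

lemma proj_sup:
  assumes A: "finite A"
  shows "cmod (\<Sum>n\<in>A. a n * ee n x) \<le> sqrt (real (card A) * (\<Sum>n\<in>A. (cmod (a n))\<^sup>2))"
proof -
  have "cmod (\<Sum>n\<in>A. a n * ee n x) \<le> (\<Sum>n\<in>A. cmod (a n))"
    by (rule order_trans[OF norm_sum]) (simp add: norm_mult)
  moreover have "(\<Sum>n\<in>A. cmod (a n))\<^sup>2 \<le> (\<Sum>n\<in>A. (cmod (a n))\<^sup>2) * card A"
    by (rule sum_squared_le_sum_of_squares)
  ultimately have "(cmod (\<Sum>n\<in>A. a n * ee n x))\<^sup>2 \<le> real (card A) * (\<Sum>n\<in>A. (cmod (a n))\<^sup>2)"
    by (metis (no_types, lifting) mult.commute norm_ge_zero power_mono order_trans)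
  then show ?thesis by (rule real_le_rsqrt)
qed



definition phi :: "real \<Rightarrow> real \<Rightarrow> real \<Rightarrow> real \<Rightarrow> real" where
  "phi p \<alpha> c s = s powr (p - 1) * (ln (c + s)) powr (\<alpha> * p)"

lemma Phi_phi: "LlogL_Phi p \<alpha> c t = integral {0..t} (phi p \<alpha> c)"
  unfolding LlogL_Phi_def phi_def by simp

lemma phi_cont:
  assumes "p > 1" "c > 1"
  shows "continuous_on {0..} (phi p \<alpha> c)"
  unfolding phi_def using assms
  by (intro continuous_intros continuous_on_powr') (auto intro!: continuous_intros)

lemma phi_nonneg: "0 \<le> phi p \<alpha> c s"
  unfolding phi_def by simp

lemma phi_integrable:
  assumes "p > 1" "c > 1" "0 \<le> u"
  shows "phi p \<alpha> c integrable_on {u..v}"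
  by (rule integrable_continuous_real, rule continuous_on_subset[OF phi_cont[OF assms(1,2)]]) (use assms in auto)

lemma Phi_split:
  assumes "p > 1" "c > 1" "0 \<le> u" "u \<le> v"
  shows "LlogL_Phi p \<alpha> c v = LlogL_Phi p \<alpha> c u + integral {u..v} (phi p \<alpha> c)"
  unfolding Phi_phi
  using Henstock_Kurzweil_Integration.integral_combine[where a=0 and c=u and b=v and f="phi p \<alpha> c"] assms phi_integrable[OF assms(1,2), where u=0 and v=v and \<alpha>=\<alpha>] by simp

lemma int_phi_ub:
  assumes "p > 1" "c > 1" "0 \<le> u" "u \<le> v" "\<And>s. s \<in> {u..v} \<Longrightarrow> phi p \<alpha> c s \<le> B"
  shows "integral {u..v} (phi p \<alpha> c) \<le> B * (v - u)"
proof -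
  have "integral {u..v} (phi p \<alpha> c) \<le> integral {u..v} (\<lambda>_. B)"
    by (rule integral_le) (use assms phi_integrable in auto)
  then show ?thesis using assms by (simp add: mult.commute)
qed

lemma int_phi_lb:
  assumes "p > 1" "c > 1" "0 \<le> u" "u \<le> v" "\<And>s. s \<in> {u..v} \<Longrightarrow> B \<le> phi p \<alpha> c s"
  shows "B * (v - u) \<le> integral {u..v} (phi p \<alpha> c)"
proof -
  have "integral {u..v} (\<lambda>_. B) \<le> integral {u..v} (phi p \<alpha> c)"
    by (rule integral_le) (use assms phi_integrable in auto)
  then show ?thesis using assms by (simp add: mult.commute)
qed

lemma int_phi_nonneg:
  assumes "p > 1" "c > 1" "0 \<le> u" "u \<le> v"
  shows "0 \<le> integral {u..v} (phi p \<alpha> c)"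
  using int_phi_lb[OF assms, of 0] phi_nonneg by simp

lemma Phi_nonneg:
  assumes "p > 1" "c > 1" "0 \<le> v"
  shows "0 \<le> LlogL_Phi p \<alpha> c v"
  unfolding Phi_phi using int_phi_nonneg[OF assms(1,2) order_refl assms(3)] by simp

lemma Phi_ub:
  assumes "p > 1" "c > 1" "0 \<le> v" "\<And>s. s \<in> {0..v} \<Longrightarrow> phi p \<alpha> c s \<le> B"
  shows "LlogL_Phi p \<alpha> c v \<le> B * v"
  unfolding Phi_phi using int_phi_ub[OF assms(1,2) order_refl assms(3)] assms(4) by simp



lemma ln_le_powr: fixes y t :: real assumes "y > 0" "t > 0" shows "ln y \<le> y powr t / t"
proof -
  have "ln (y powr t) \<le> y powr t - 1" using assms ln_le_minus_one[of "y powr t"] by simp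
  then have "t * ln y \<le> y powr t" using assms by (simp add: ln_powr)
  then show ?thesis using assms by (simp add: field_simps)
qed

lemma PL:
  fixes \<delta> k :: real assumes "\<delta> > 0" "k \<ge> 0"
  shows "\<exists>c1>0. \<forall>x\<ge>1. ln (exp 1 + x) powr k \<le> c1 * x powr \<delta>"
proof (cases "k = 0")
  case True
  then show ?thesis
    using assms by (intro exI[of _ 1]) (auto simp: ge_one_powr_ge_zero)
next
  case False
  then have k: "k > 0" using assms by simp
  define e where "e = \<delta> / k"
  have e: "e > 0" using assms k by (simp add: e_def)
  define c1 where "c1 = (exp 1 + 1) powr \<delta> / e powr k"
  show ?thesis
  proof (intro exI[of _ c1] conjI allI impI)
    have "exp 1 + 1 > (0::real)" by (smt (verit) exp_gt_zero)
    then show "c1 > 0" using e unfolding c1_def by (intro divide_pos_pos) auto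
    fix x :: real assume x: "x \<ge> 1"
    have pos: "0 < exp 1 + x" using x by (smt (verit) exp_gt_zero)
    have l1: "1 \<le> ln (exp 1 + x)"
      using x by (subst ln_ge_iff) (auto simp: pos)
    have "ln (exp 1 + x) \<le> (exp 1 + x) powr e / e" by (rule ln_le_powr[OF pos e])
    also have "\<dots> \<le> ((exp 1 + 1) * x) powr e / e"
      using x e by (intro divide_right_mono powr_mono2) (auto simp: algebra_simps)
    finally have "ln (exp 1 + x) powr k \<le> (((exp 1 + 1) * x) powr e / e) powr k"
      using l1 k by (intro powr_mono2) auto
    also have "\<dots> = ((exp 1 + 1) * x) powr (e * k) / e powr k"
      using e x by (simp add: powr_divide powr_powr)
    also have "\<dots> = c1 * x powr \<delta>"
      using e x k by (simp add: c1_def e_def powr_mult)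
    finally show "ln (exp 1 + x) powr k \<le> c1 * x powr \<delta>" .
  qed
qed



lemma ln_c_le:
  fixes c s :: real assumes "c > 1" "s \<ge> 0"
  shows "ln (c + s) \<le> (ln c + 1) * ln (exp 1 + s)"
proof -
  have pos: "0 < exp 1 + s" using assms by (smt (verit) exp_gt_zero)
  have l1: "1 \<le> ln (exp 1 + s)" using assms by (subst ln_ge_iff) (auto simp: pos)
  have "c + s \<le> c * (exp 1 + s)"
  proof -
    have "1 \<le> exp (1::real)" by simp
    then have "c \<le> c * exp 1" using assms by simp
    moreover have "s \<le> c * s" using assms mult_right_mono[of 1 c s] by simp
    ultimately show ?thesis by (simp add: algebra_simps)
  qed
  then have "ln (c + s) \<le> ln (c * (exp 1 + s))" using assms by (intro ln_mono) auto
  also have "\<dots> = ln c + ln (exp 1 + s)" using assms pos by (simp add: ln_mult)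
  also have "\<dots> \<le> ln c * ln (exp 1 + s) + ln (exp 1 + s)"
    using l1 assms by (simp add: mult_le_cancel_left1)
  finally show ?thesis by (simp add: algebra_simps)
qed

lemma phi_lin_lb:
  assumes hyp: "2 < p \<or> (p = 2 \<and> \<alpha> \<ge> 0)" and c: "c > 1"
  shows "\<exists>m>0. \<forall>s\<ge>1. m * s \<le> phi p \<alpha> c s"
proof (cases "\<alpha> \<ge> 0")
  case True
  define m where "m = ln c powr (\<alpha> * p)"
  have lc: "ln c > 0" using c by simp
  show ?thesis
  proof (intro exI[of _ m] conjI allI impI)
    show "m > 0" using lc by (simp add: m_def)
    fix s :: real assume s: "s \<ge> 1"
    have "s \<le> s powr (p - 1)"
      using s hyp powr_mono[of 1 "p - 1" s] by auto
    moreover have "m \<le> ln (c + s) powr (\<alpha> * p)"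
      unfolding m_def using True hyp c s lc by (intro powr_mono2) auto
    ultimately have "m * s \<le> ln (c + s) powr (\<alpha> * p) * s powr (p - 1)"
      using s \<open>m > 0\<close> by (intro mult_mono) auto
    then show "m * s \<le> phi p \<alpha> c s"
      unfolding phi_def by (simp add: mult.commute)
  qed
next
  case False
  then have p: "p > 2" and a: "\<alpha> < 0" using hyp by auto
  have ap: "\<alpha> * p \<le> 0" using a p by (simp add: mult_nonpos_nonneg)
  obtain c3 where c3: "c3 > 0" "\<And>x. x \<ge> 1 \<Longrightarrow> ln (exp 1 + x) powr (- \<alpha> * p) \<le> c3 * x powr (p - 2)"
  proof -
    have "\<alpha> * p \<le> 0" using a p by (simp add: mult_nonpos_nonneg)
    then show ?thesis using PL[of "p - 2" "- \<alpha> * p"] p that by auto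
  qed
  define Lc where "Lc = ln c + 1"
  have Lc: "Lc > 1" using c by (simp add: Lc_def)
  define m where "m = 1 / (Lc powr (- \<alpha> * p) * c3)"
  show ?thesis
  proof (intro exI[of _ m] conjI allI impI)
    show "m > 0" using Lc c3 by (simp add: m_def)
    fix s :: real assume s: "s \<ge> 1"
    have lcs: "ln (c + s) > 0" using c s by simp
    have "ln (c + s) powr (- \<alpha> * p) \<le> (Lc * ln (exp 1 + s)) powr (- \<alpha> * p)"
      using ln_c_le[OF c, of s] s ap lcs unfolding Lc_def by (intro powr_mono2) auto
    also have "\<dots> = Lc powr (- \<alpha> * p) * ln (exp 1 + s) powr (- \<alpha> * p)"
      using Lc s by (subst powr_mult) (auto simp: add_pos_nonneg)
    also have "\<dots> \<le> Lc powr (- \<alpha> * p) * (c3 * s powr (p - 2))"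
      using c3(2)[OF s] by (intro mult_left_mono) auto
    finally have le: "ln (c + s) powr (- \<alpha> * p) \<le> s powr (p - 2) / m"
      by (simp add: m_def mult_ac)
    have "m * s = m * (s powr (p - 1) / s powr (p - 2))"
      using s by (simp add: powr_diff[symmetric])
    also have "\<dots> \<le> s powr (p - 1) / ln (c + s) powr (- \<alpha> * p)"
    proof -
      have "m * ln (c + s) powr (- \<alpha> * p) \<le> s powr (p - 2)"
        using le \<open>m > 0\<close> by (simp add: field_simps)
      then show ?thesis using \<open>m > 0\<close> lcs s
        by (simp add: field_simps)
    qed
    also have "\<dots> = phi p \<alpha> c s"
      unfolding phi_def using lcs by (simp add: powr_minus divide_inverse)
    finally show "m * s \<le> phi p \<alpha> c s" .
  qed
qed

lemma Phi_quad_lb: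
  assumes hyp: "2 < p \<or> (p = 2 \<and> \<alpha> \<ge> 0)" and c: "c > 1"
  shows "\<exists>a>0. \<forall>t\<ge>0. a * t\<^sup>2 - 4 * a \<le> LlogL_Phi p \<alpha> c t"
proof -
  obtain m where m: "m > 0" "\<And>s. s \<ge> 1 \<Longrightarrow> m * s \<le> phi p \<alpha> c s"
    using phi_lin_lb[OF hyp c] by auto
  have p1: "p > 1" using hyp by auto
  show ?thesis
  proof (intro exI[of _ "m/4"] conjI allI impI)
    show "m / 4 > 0" using m by simp
    fix t :: real assume t: "t \<ge> 0"
    show "m / 4 * t\<^sup>2 - 4 * (m / 4) \<le> LlogL_Phi p \<alpha> c t"
    proof (cases "t \<ge> 2")
      case True
      have "m * (t/2) * (t - t/2) \<le> integral {t/2..t} (phi p \<alpha> c)"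
      proof (rule int_phi_lb[OF p1 c])
        fix s assume "s \<in> {t/2..t}"
        then have "m * (t/2) \<le> m * s" "s \<ge> 1" using True m by auto
        then show "m * (t/2) \<le> phi p \<alpha> c s" using m(2)[of s] by linarith
      qed (use True in auto)
      also have "\<dots> \<le> LlogL_Phi p \<alpha> c t"
        using Phi_split[OF p1 c, of "t/2" t] Phi_nonneg[OF p1 c, of "t/2"] True by auto
      finally show ?thesis using m by (simp add: power2_eq_square field_simps)
    next
      case False
      then have "m / 4 * t\<^sup>2 \<le> m / 4 * 4" using t m
        by (intro mult_left_mono) (auto simp: power2_eq_square intro: mult_mono[of t 2 t 2, simplified])
      then show ?thesis using Phi_nonneg[OF p1 c t, of \<alpha>] by linarith
    qed
  qed
qed



lemma Phi_zero[simp]: "LlogL_Phi p \<alpha> c 0 = 0"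
  unfolding LlogL_Phi_def by simp

lemma ell_ge1: "(x::real) \<ge> 0 \<Longrightarrow> 1 \<le> ln (exp 1 + x)"
  by (subst ln_ge_iff) (auto intro: add_pos_nonneg)

lemma CR_pos:
  assumes p: "p \<ge> 2" and a: "\<alpha> \<ge> 0" and c: "c > 1"
  shows "\<exists>D\<ge>1. \<forall>x\<ge>1. \<forall>v. 0 \<le> v \<and> v \<le> x powr (1/p) * ln (exp 1 + x) powr (-\<alpha>) / D \<longrightarrow>
     LlogL_Phi p \<alpha> c v \<le> v\<^sup>2 * (D\<^sup>2 * x powr (1 - 2/p) * ln (exp 1 + x) powr (2*\<alpha>))"
proof -
  define K where "K = (ln c + 1) powr (\<alpha> * p)"
  define D where "D = max 1 K"
  have D1: "D \<ge> 1" by (simp add: D_def)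
  have KD: "K \<le> D\<^sup>2"
  proof -
    have "K \<le> D" by (simp add: D_def)
    also have "D \<le> D\<^sup>2" using D1 by (simp add: power2_eq_square)
    finally show ?thesis .
  qed
  have p1: "p > 1" using p by simp
  show ?thesis
  proof (intro exI[of _ D] conjI allI impI, fact D1)
    fix x v :: real assume x: "x \<ge> 1" and v: "0 \<le> v \<and> v \<le> x powr (1/p) * ln (exp 1 + x) powr (-\<alpha>) / D"
    define l where "l = ln (exp 1 + x)"
    have l1: "1 \<le> l" unfolding l_def using x by (intro ell_ge1) simp
    have v0: "0 \<le> v" using v by simp
    define s0 where "s0 = x powr (1/p) * l powr (-\<alpha>)"
    have vs0: "v \<le> s0"
    proof -
      have "v \<le> s0 / D" using v by (simp add: s0_def l_def)
      also have "\<dots> \<le> s0 / 1" using D1 by (intro divide_left_mono) (auto simp: s0_def)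
      finally show ?thesis by simp
    qed
    have s0x: "s0 \<le> x"
    proof -
      have "l powr (-\<alpha>) \<le> 1" using l1 a by (simp add: powr_minus_divide ge_one_powr_ge_zero)
      then have "s0 \<le> x powr (1/p)" unfolding s0_def using x
        by (simp add: mult_left_le)
      also have "\<dots> \<le> x powr 1" using x p by (intro powr_mono) auto
      finally show ?thesis using x by simp
    qed
    show "LlogL_Phi p \<alpha> c v \<le> v\<^sup>2 * (D\<^sup>2 * x powr (1 - 2/p) * ln (exp 1 + x) powr (2*\<alpha>))"
    proof (cases "v = 0")
      case True then show ?thesis by simp
    next
      case False
      then have vp: "v > 0" using v0 by simp
      have "LlogL_Phi p \<alpha> c v \<le> (v powr (p - 1) * ln (c + v) powr (\<alpha> * p)) * v"
      proof (rule Phi_ub[OF p1 c v0])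
        fix s assume s: "s \<in> {0..v}"
        show "phi p \<alpha> c s \<le> v powr (p - 1) * ln (c + v) powr (\<alpha> * p)"
          unfolding phi_def using s p a c
          by (intro mult_mono powr_mono2) auto
      qed
      also have "\<dots> = v\<^sup>2 * (v powr (p - 2) * ln (c + v) powr (\<alpha> * p))"
      proof -
        have "v powr (p - 1) * v = v powr (p - 2) * v\<^sup>2"
        proof -
          have "v powr (p - 1) = v powr ((p - 2) + 1)" by simp
          also have "\<dots> = v powr (p - 2) * v" unfolding powr_add using vp by simp
          finally show ?thesis by (simp add: power2_eq_square)
        qed
        then show ?thesis by (simp add: mult_ac)
      qed
      also have "\<dots> \<le> v\<^sup>2 * (D\<^sup>2 * x powr (1 - 2/p) * l powr (2*\<alpha>))"
      proof (rule mult_left_mono)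
        have A1: "v powr (p - 2) \<le> x powr ((p - 2)/p) * l powr (- \<alpha> * (p - 2))"
        proof -
          have "v powr (p - 2) \<le> s0 powr (p - 2)" using vs0 v0 p by (intro powr_mono2) auto
          also have "\<dots> = x powr ((p - 2)/p) * l powr (- \<alpha> * (p - 2))"
            unfolding s0_def using x l1 by (simp add: powr_mult powr_powr)
          finally show ?thesis .
        qed
        have A2: "ln (c + v) powr (\<alpha> * p) \<le> K * l powr (\<alpha> * p)"
        proof -
          have "ln (c + v) \<le> ln (c + x)" using vs0 s0x c v0 by (intro ln_mono) auto
          also have "\<dots> \<le> (ln c + 1) * l" unfolding l_def using ln_c_le[OF c, of x] x by simp
          finally have "ln (c + v) powr (\<alpha> * p) \<le> ((ln c + 1) * l) powr (\<alpha> * p)"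
            using c v0 a p by (intro powr_mono2) auto
          also have "\<dots> = K * l powr (\<alpha> * p)"
            unfolding K_def using c l1 by (simp add: powr_mult)
          finally show ?thesis .
        qed
        have "v powr (p - 2) * ln (c + v) powr (\<alpha> * p)
              \<le> (x powr ((p - 2)/p) * l powr (- \<alpha> * (p - 2))) * (K * l powr (\<alpha> * p))"
          by (rule mult_mono[OF A1 A2]) auto
        also have "\<dots> = K * x powr (1 - 2/p) * l powr (2*\<alpha>)"
        proof -
          have "l powr (- \<alpha> * (p - 2)) * l powr (\<alpha> * p) = l powr (2*\<alpha>)"
            using l1 by (simp add: powr_add[symmetric] algebra_simps)
          moreover have "(p - 2)/p = 1 - 2/p" using p by (simp add: field_simps)
          ultimately show ?thesis by (simp add: mult_ac)
        qed
        also have "\<dots> \<le> D\<^sup>2 * x powr (1 - 2/p) * l powr (2*\<alpha>)"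
          using KD by (intro mult_right_mono) auto
        finally show "v powr (p - 2) * ln (c + v) powr (\<alpha> * p) \<le> D\<^sup>2 * x powr (1 - 2/p) * l powr (2*\<alpha>)" .
      qed simp
      finally show ?thesis by (simp add: l_def)
    qed
  qed
qed



lemma Phi_E:
  assumes p: "p > 1" and c: "c > 1" and a: "\<alpha> \<le> 0" and v: "v \<ge> 0"
  shows "LlogL_Phi p \<alpha> c v \<le> ln c powr (\<alpha> * p) * v powr p"
proof -
  have ap: "\<alpha> * p \<le> 0" using a p by (simp add: mult_nonpos_nonneg)
  have "LlogL_Phi p \<alpha> c v \<le> (v powr (p - 1) * ln c powr (\<alpha> * p)) * v"
  proof (rule Phi_ub[OF p c v])
    fix s assume s: "s \<in> {0..v}"
    have "ln (c + s) powr (\<alpha> * p) \<le> ln c powr (\<alpha> * p)"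
      using s c ap by (intro powr_mono2') auto
    moreover have "s powr (p - 1) \<le> v powr (p - 1)" using s p by (intro powr_mono2) auto
    ultimately show "phi p \<alpha> c s \<le> v powr (p - 1) * ln c powr (\<alpha> * p)"
      unfolding phi_def by (intro mult_mono) auto
  qed
  also have "\<dots> = ln c powr (\<alpha> * p) * v powr p"
  proof (cases "v = 0")
    case True then show ?thesis using p by simp
  next
    case False
    have "v powr p = v powr ((p - 1) + 1)" by simp
    also have "\<dots> = v powr (p - 1) * v" unfolding powr_add using False v by simp
    finally show ?thesis by (simp add: mult_ac)
  qed
  finally show ?thesis .
qed

lemma ln_sqrt_half:
  assumes c: "c > 1" and v: "v \<ge> 0"
  shows "ln (c + v) \<le> 2 * ln (c + sqrt v)"
proof -
  have "c + v \<le> (c + sqrt v)\<^sup>2"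
  proof -
    have "c * sqrt v \<ge> 0" using c v by simp
    moreover have "c \<le> c * c" using c by simp
    ultimately have "c + v \<le> c * c + 2 * c * sqrt v + v" by simp
    then show ?thesis using v by (simp add: power2_eq_square algebra_simps)
  qed
  then have "ln (c + v) \<le> ln ((c + sqrt v)\<^sup>2)" using c v by (intro ln_mono) auto
  also have "\<dots> = 2 * ln (c + sqrt v)" using c v by (simp add: ln_realpow)
  finally show ?thesis .
qed

lemma Phi_split_bound:
  assumes p: "p > 1" and c: "c > 1" and a: "\<alpha> \<le> 0" and v: "v \<ge> 1"
  shows "LlogL_Phi p \<alpha> c v \<le> ln c powr (\<alpha> * p) * v powr (p/2)
            + 2 powr (- \<alpha> * p) * v powr p * ln (c + v) powr (\<alpha> * p)"
proof -
  have ap: "\<alpha> * p \<le> 0" using a p by (simp add: mult_nonpos_nonneg)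
  define u where "u = sqrt v"
  have u1: "1 \<le> u" using v by (simp add: u_def)
  have uv: "u \<le> v"
  proof -
    have "u * 1 \<le> u * u" using u1 by (intro mult_left_mono) auto
    then show ?thesis using v by (simp add: u_def)
  qed
  have "LlogL_Phi p \<alpha> c v = LlogL_Phi p \<alpha> c u + integral {u..v} (phi p \<alpha> c)"
    using Phi_split[OF p c _ uv] u1 by simp
  also have "LlogL_Phi p \<alpha> c u \<le> ln c powr (\<alpha> * p) * v powr (p/2)"
  proof -
    have "LlogL_Phi p \<alpha> c u \<le> ln c powr (\<alpha> * p) * u powr p" using Phi_E[OF p c a] u1 by simp
    also have "u powr p = v powr (p/2)"
    proof -
      have "u = v powr (1/2)" unfolding u_def using v by (simp add: powr_half_sqrt)
      then have "u powr p = v powr (1/2 * p)" by (simp only: powr_powr)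
      then show ?thesis by simp
    qed
    finally show ?thesis .
  qed
  also have "integral {u..v} (phi p \<alpha> c) \<le> (v powr (p - 1) * (2 powr (- \<alpha> * p) * ln (c + v) powr (\<alpha> * p))) * (v - u)"
  proof (rule int_phi_ub[OF p c _ uv])
    show "0 \<le> u" using u1 by simp
    fix s assume s: "s \<in> {u..v}"
    have l: "ln (c + v) / 2 \<le> ln (c + s)"
    proof -
      have "ln (c + u) \<le> ln (c + s)" using s c u1 by (intro ln_mono) auto
      then show ?thesis using ln_sqrt_half[OF c, of v] v unfolding u_def by simp
    qed
    have lpos: "0 < ln (c + v) / 2" using c v by simp
    have "ln (c + s) powr (\<alpha> * p) \<le> (ln (c + v) / 2) powr (\<alpha> * p)"
      by (rule powr_mono2'[OF ap lpos l])
    also have "\<dots> = 2 powr (- \<alpha> * p) * ln (c + v) powr (\<alpha> * p)"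
    proof -
      have "(ln (c + v) / 2) powr (\<alpha> * p) = ln (c + v) powr (\<alpha> * p) / 2 powr (\<alpha> * p)"
        using lpos by (subst powr_divide) auto
      also have "\<dots> = 2 powr (- \<alpha> * p) * ln (c + v) powr (\<alpha> * p)"
        by (simp add: powr_minus divide_inverse)
      finally show ?thesis .
    qed
    finally have A: "ln (c + s) powr (\<alpha> * p) \<le> 2 powr (- \<alpha> * p) * ln (c + v) powr (\<alpha> * p)" .
    have B: "s powr (p - 1) \<le> v powr (p - 1)" using s p u1 by (intro powr_mono2) auto
    show "phi p \<alpha> c s \<le> v powr (p - 1) * (2 powr (- \<alpha> * p) * ln (c + v) powr (\<alpha> * p))"
      unfolding phi_def by (intro mult_mono A B) auto
  qed
  also have "(v powr (p - 1) * (2 powr (- \<alpha> * p) * ln (c + v) powr (\<alpha> * p))) * (v - u)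
      \<le> (v powr (p - 1) * (2 powr (- \<alpha> * p) * ln (c + v) powr (\<alpha> * p))) * v"
    using u1 by (intro mult_left_mono) auto
  also have "\<dots> = 2 powr (- \<alpha> * p) * v powr p * ln (c + v) powr (\<alpha> * p)"
  proof -
    have "v powr p = v powr ((p - 1) + 1)" by simp
    also have "\<dots> = v powr (p - 1) * v" unfolding powr_add using v by simp
    finally show ?thesis by (simp add: mult_ac)
  qed
  finally show ?thesis by simp
qed

lemma ln_lower:
  fixes x c p v :: real
  assumes x: "x \<ge> 1" and c: "c > 1" and p: "p > 0" and v: "v \<ge> x powr (1/(2*p))"
  shows "ln (exp 1 + x) / ((1 + ln 2) / ln 2 + 2 * p) \<le> ln (c + v)"
proof -
  define L where "L = ln (c + v)"
  have xp1: "1 \<le> x powr (1/(2*p))" using x p by (intro ge_one_powr_ge_zero) auto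
  have v1: "1 \<le> v" using xp1 v by simp
  have L2: "ln 2 \<le> L" unfolding L_def using c v1 by (intro ln_mono) auto
  have Lx: "ln x \<le> 2 * p * L"
  proof -
    have "ln x / (2 * p) = ln (x powr (1/(2*p)))" using x p by (simp add: ln_powr)
    also have "\<dots> \<le> L" unfolding L_def using xp1 v c by (intro ln_mono) auto
    finally show ?thesis using p by (simp add: field_simps)
  qed
  have "exp 1 + x \<le> 2 * exp 1 * x"
  proof -
    have e1: "1 \<le> exp (1::real)" by simp
    have "exp 1 * 1 \<le> exp 1 * x" using x by (intro mult_left_mono) auto
    moreover have "1 * x \<le> exp 1 * x" using x e1 by (intro mult_right_mono) auto
    ultimately have "exp 1 \<le> exp 1 * x" "x \<le> exp 1 * x" by auto
    then show ?thesis by linarith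
  qed
  then have "ln (exp 1 + x) \<le> ln (2 * exp 1 * x)" using x
    by (intro ln_mono) (auto intro: add_pos_nonneg)
  also have "\<dots> = ln 2 + 1 + ln x" using x by (simp add: ln_mult)
  also have "\<dots> \<le> (1 + ln 2) / ln 2 * L + 2 * p * L"
  proof -
    have m: "ln 2 * ln 2 \<le> L * ln 2" using L2 by (intro mult_right_mono) auto
    have "ln 2 + ln 2 * ln 2 \<le> L + L * ln 2" using L2 m by linarith
    then have "ln 2 + 1 \<le> (1 + ln 2) / ln 2 * L"
      by (simp add: field_simps)
    then show ?thesis using Lx by linarith
  qed
  finally have "ln (exp 1 + x) \<le> ((1 + ln 2) / ln 2 + 2 * p) * L" by (simp add: algebra_simps)
  moreover have "0 < (1 + ln 2) / ln 2 + 2 * p" using p by (simp add: add_pos_pos)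
  ultimately show ?thesis by (simp add: L_def field_simps)
qed



lemma CR_neg:
  assumes p: "p > 2" and a: "\<alpha> < 0" and c: "c > 1"
  shows "\<exists>D\<ge>1. \<forall>x\<ge>1. \<forall>v. 0 \<le> v \<and> v \<le> x powr (1/p) * ln (exp 1 + x) powr (-\<alpha>) / D \<longrightarrow>
     LlogL_Phi p \<alpha> c v \<le> v\<^sup>2 * (D\<^sup>2 * x powr (1 - 2/p) * ln (exp 1 + x) powr (2*\<alpha>))"
proof -
  have p1: "p > 1" using p by simp
  have ap: "\<alpha> * p \<le> 0" using a p by (simp add: mult_nonpos_nonneg)
  define \<beta> where "\<beta> = (p - 2) / (2 * p)"
  have \<beta>: "\<beta> > 0" using p by (simp add: \<beta>_def)
  have b2: "1 - 2/p = \<beta> + \<beta>" using p by (simp add: \<beta>_def field_simps)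
  define E where "E = ln c powr (\<alpha> * p)"
  have E: "E > 0" using c by (simp add: E_def)
  obtain c1 where c1: "c1 > 0" "\<And>x. x \<ge> 1 \<Longrightarrow> ln (exp 1 + x) powr (- \<alpha> * (p + 2) / 2) \<le> c1 * x powr \<beta>"
  proof -
    have "- \<alpha> * (p + 2) / 2 \<ge> 0" using a p by (simp add: mult_nonpos_nonneg)
    then show ?thesis using PL[OF \<beta>, of "- \<alpha> * (p + 2) / 2"] that by auto
  qed
  obtain c2 where c2: "c2 > 0" "\<And>x. x \<ge> 1 \<Longrightarrow> ln (exp 1 + x) powr (- 2 * \<alpha>) \<le> c2 * x powr \<beta>"
  proof -
    have "- 2 * \<alpha> \<ge> 0" using a by simp
    then show ?thesis using PL[OF \<beta>, of "- 2 * \<alpha>"] that by auto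
  qed
  define a0 where "a0 = 1 / ((1 + ln 2) / ln 2 + 2 * p)"
  have a0: "a0 > 0" using p by (simp add: a0_def add_pos_pos)
  define Q where "Q = 2 powr (- \<alpha> * p)"
  have Q: "Q > 0" by (simp add: Q_def)
  have Q1: "Q \<ge> 1" unfolding Q_def using ap by (intro ge_one_powr_ge_zero) auto
  define D where "D = max (max 1 (2 * E * c1)) (max (2 * Q * E * c2) (2 * Q * a0 powr (\<alpha> * p)))"
  have D1: "D \<ge> 1" and D_1: "2 * E * c1 \<le> D" and D_2: "2 * Q * E * c2 \<le> D"
    and D_3: "2 * Q * a0 powr (\<alpha> * p) \<le> D"
    unfolding D_def by auto
  have DD: "D \<le> D\<^sup>2" using D1 by (simp add: power2_eq_square)
  show ?thesis
  proof (intro exI[of _ D] conjI allI impI, fact D1)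
    fix x v :: real assume x: "x \<ge> 1" and v: "0 \<le> v \<and> v \<le> x powr (1/p) * ln (exp 1 + x) powr (-\<alpha>) / D"
    define l where "l = ln (exp 1 + x)"
    have l1: "1 \<le> l" unfolding l_def using x by (intro ell_ge1) simp
    have v0: "0 \<le> v" using v by simp
    define s0 where "s0 = x powr (1/p) * l powr (-\<alpha>)"
    have s0pos: "s0 > 0" using x l1 by (simp add: s0_def)
    have vs0D: "v \<le> s0 / D" using v by (simp add: s0_def l_def)
    have vs0: "v \<le> s0"
    proof -
      have "s0 / D \<le> s0 / 1" using D1 s0pos by (intro divide_left_mono) auto
      then show ?thesis using vs0D by simp
    qed
    define T where "T = D\<^sup>2 * (x powr \<beta> * x powr \<beta>) * l powr (2*\<alpha>)"
    have xb1: "1 \<le> x powr \<beta>" using x \<beta> by (intro ge_one_powr_ge_zero) auto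
    have Teq: "D\<^sup>2 * x powr (1 - 2/p) * l powr (2*\<alpha>) = T"
    proof -
      have "x powr (1 - 2/p) = x powr \<beta> * x powr \<beta>" by (simp only: b2 powr_add)
      then show ?thesis unfolding T_def by simp
    qed
    have ll: "l powr (2*\<alpha>) * l powr (- 2 * \<alpha>) = 1"
    proof -
      have "l powr (2*\<alpha>) * l powr (- 2 * \<alpha>) = l powr (2*\<alpha> + - 2 * \<alpha>)" by (rule powr_add[symmetric])
      also have "\<dots> = 1" using l1 by simp
      finally show ?thesis .
    qed
    have key: "K * x powr \<beta> \<le> T" if "K * l powr (- 2 * \<alpha>) \<le> D\<^sup>2 * x powr \<beta>" for K
    proof -
      have "K * x powr \<beta> = K * x powr \<beta> * (l powr (2*\<alpha>) * l powr (- 2 * \<alpha>))"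
        by (simp only: ll mult_1_right)
      also have "\<dots> = (K * l powr (- 2 * \<alpha>)) * x powr \<beta> * l powr (2*\<alpha>)"
        by (simp only: mult_ac)
      also have "\<dots> \<le> (D\<^sup>2 * x powr \<beta>) * x powr \<beta> * l powr (2*\<alpha>)"
        using that by (intro mult_right_mono) auto
      also have "\<dots> = T" unfolding T_def by (simp only: mult_ac)
      finally show ?thesis .
    qed
    have Tpos: "T > 0" using x l1 D1 unfolding T_def by (intro mult_pos_pos) auto
    have "LlogL_Phi p \<alpha> c v \<le> v\<^sup>2 * T"
    proof (cases "v \<le> 1")
      case True
      have "LlogL_Phi p \<alpha> c v \<le> E * v powr p" using Phi_E[OF p1 c _ v0] a by (simp add: E_def)
      also have "\<dots> \<le> E * v\<^sup>2"
      proof (cases "v = 0")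
        case True then show ?thesis using p by simp
      next
        case False
        have "v powr p \<le> v powr 2" using True v0 p by (intro powr_mono') auto
        then show ?thesis using E False v0 by (simp add: powr_numeral)
      qed
      also have "\<dots> \<le> v\<^sup>2 * T"
      proof -
        have "E * l powr (- 2 * \<alpha>) \<le> E * (c2 * x powr \<beta>)"
          using c2(2)[OF x] E unfolding l_def by (intro mult_left_mono) auto
        also have "\<dots> \<le> D * x powr \<beta>"
        proof -
          have "E * c2 * 1 \<le> E * c2 * (2 * Q)" using Q1 E c2 by (intro mult_left_mono) auto
          then have "E * c2 \<le> D" using D_2 by (simp add: mult_ac)
          then show ?thesis using xb1 by (simp add: mult.assoc[symmetric] mult_right_mono)
        qed
        also have "\<dots> \<le> D\<^sup>2 * x powr \<beta>" using DD xb1 by (intro mult_right_mono) auto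
        finally have "E * x powr \<beta> \<le> T" by (rule key)
        moreover have "E * 1 \<le> E * x powr \<beta>" using xb1 E by (intro mult_left_mono) auto
        ultimately have "E \<le> T" by simp
        then show ?thesis by (simp add: mult.commute mult_right_mono)
      qed
      finally show ?thesis .
    next
      case False
      then have v1: "v \<ge> 1" by simp
      have "LlogL_Phi p \<alpha> c v \<le> E * v powr (p/2) + Q * v powr p * ln (c + v) powr (\<alpha> * p)"
        using Phi_split_bound[OF p1 c _ v1] a by (simp add: E_def Q_def)
      also have "\<dots> \<le> v\<^sup>2 * (T/2) + v\<^sup>2 * (T/2)"
      proof (rule add_mono)
        show "E * v powr (p/2) \<le> v\<^sup>2 * (T/2)"
        proof -
          have vp: "v > 0" using v1 by simp
          have e1: "v powr (p/2) = v\<^sup>2 * v powr (p/2 - 2)"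
          proof -
            have "v powr (p/2) = v powr (2 + (p/2 - 2))" by simp
            also have "\<dots> = v powr 2 * v powr (p/2 - 2)" by (rule powr_add)
            finally show ?thesis using vp by (simp add: powr_numeral)
          qed
          have "v powr (p/2 - 2) \<le> v powr ((p-2)/2)" using v1 by (intro powr_mono) auto
          also have "\<dots> \<le> s0 powr ((p-2)/2)" using vs0 v1 p by (intro powr_mono2) auto
          also have "\<dots> = x powr \<beta> * l powr (- \<alpha> * ((p-2)/2))"
          proof -
            have "s0 powr ((p-2)/2) = (x powr (1/p)) powr ((p-2)/2) * (l powr (-\<alpha>)) powr ((p-2)/2)"
              unfolding s0_def using x l1 by (subst powr_mult) auto
            also have "\<dots> = x powr (1/p * ((p-2)/2)) * l powr (- \<alpha> * ((p-2)/2))"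
              by (simp only: powr_powr)
            also have "1/p * ((p-2)/2) = \<beta>" unfolding \<beta>_def using p by (simp add: field_simps)
            finally show ?thesis .
          qed
          finally have A1: "v powr (p/2 - 2) \<le> x powr \<beta> * l powr (- \<alpha> * ((p-2)/2))" .
          define K where "K = 2 * E * l powr (- \<alpha> * ((p-2)/2))"
          have "K * l powr (- 2 * \<alpha>) = 2 * E * l powr (- \<alpha> * (p + 2) / 2)"
          proof -
            have "l powr (- \<alpha> * ((p-2)/2)) * l powr (- 2 * \<alpha>) = l powr (- \<alpha> * ((p-2)/2) + - 2 * \<alpha>)"
              by (rule powr_add[symmetric])
            also have "- \<alpha> * ((p-2)/2) + - 2 * \<alpha> = - \<alpha> * (p + 2) / 2" by (simp add: field_simps)
            finally show ?thesis unfolding K_def by (simp only: mult_ac)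
          qed
          also have "\<dots> \<le> 2 * E * (c1 * x powr \<beta>)"
            using c1(2)[OF x] E unfolding l_def by (intro mult_left_mono) auto
          also have "\<dots> = (2 * E * c1) * x powr \<beta>" by (simp only: mult_ac)
          also have "\<dots> \<le> D * x powr \<beta>" using D_1 xb1 by (intro mult_right_mono) auto
          also have "\<dots> \<le> D\<^sup>2 * x powr \<beta>" using DD xb1 by (intro mult_right_mono) auto
          finally have "K * x powr \<beta> \<le> T" by (rule key)
          then have A2: "E * (x powr \<beta> * l powr (- \<alpha> * ((p-2)/2))) \<le> T / 2"
            unfolding K_def by (simp add: mult_ac)
          have "E * v powr (p/2) = v\<^sup>2 * (E * v powr (p/2 - 2))" unfolding e1 by (simp only: mult_ac)
          also have "\<dots> \<le> v\<^sup>2 * (E * (x powr \<beta> * l powr (- \<alpha> * ((p-2)/2))))"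
            using A1 E by (intro mult_left_mono) auto
          also have "\<dots> \<le> v\<^sup>2 * (T/2)" using A2 by (intro mult_left_mono) auto
          finally show ?thesis .
        qed
        show "Q * v powr p * ln (c + v) powr (\<alpha> * p) \<le> v\<^sup>2 * (T/2)"
        proof -
          have vp: "v > 0" using v1 by simp
          have e1: "v powr p = v\<^sup>2 * v powr (p - 2)"
          proof -
            have "v powr p = v powr (2 + (p - 2))" by simp
            also have "\<dots> = v powr 2 * v powr (p - 2)" by (rule powr_add)
            finally show ?thesis using vp by (simp add: powr_numeral)
          qed
          have lcv: "ln (c + v) > 0" using c v1 by simp
          have B1: "v powr (p - 2) * ln (c + v) powr (\<alpha> * p) \<le> T / (2 * Q)"
          proof (cases "v \<le> x powr (1/(2*p))")
            case True
            have "v powr (p - 2) \<le> (x powr (1/(2*p))) powr (p - 2)"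
              using True v1 p by (intro powr_mono2) auto
            also have "\<dots> = x powr \<beta>"
            proof -
              have "(x powr (1/(2*p))) powr (p - 2) = x powr (1/(2*p) * (p - 2))" by (simp only: powr_powr)
              also have "1/(2*p) * (p - 2) = \<beta>" unfolding \<beta>_def using p by (simp add: field_simps)
              finally show ?thesis .
            qed
            finally have b1: "v powr (p - 2) \<le> x powr \<beta>" .
            have b2: "ln (c + v) powr (\<alpha> * p) \<le> E"
              unfolding E_def using c v1 ap by (intro powr_mono2') auto
            have "v powr (p - 2) * ln (c + v) powr (\<alpha> * p) \<le> x powr \<beta> * E"
              using b1 b2 by (intro mult_mono) auto
            also have "\<dots> \<le> T / (2 * Q)"
            proof -
              have "(2 * Q * E) * l powr (- 2 * \<alpha>) \<le> (2 * Q * E) * (c2 * x powr \<beta>)"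
                using c2(2)[OF x] E Q unfolding l_def by (intro mult_left_mono) auto
              also have "\<dots> = (2 * Q * E * c2) * x powr \<beta>" by (simp only: mult_ac)
              also have "\<dots> \<le> D * x powr \<beta>" using D_2 xb1 by (intro mult_right_mono) auto
              also have "\<dots> \<le> D\<^sup>2 * x powr \<beta>" using DD xb1 by (intro mult_right_mono) auto
              finally have "(2 * Q * E) * x powr \<beta> \<le> T" by (rule key)
              then show ?thesis using Q by (simp add: field_simps)
            qed
            finally show ?thesis .
          next
            case False
            have low: "a0 * l \<le> ln (c + v)"
              using ln_lower[OF x c _, of p v] False p unfolding a0_def l_def by simp
            have a0l: "a0 * l > 0" using a0 l1 by simp
            have b2: "ln (c + v) powr (\<alpha> * p) \<le> a0 powr (\<alpha> * p) * l powr (\<alpha> * p)"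
            proof -
              have "ln (c + v) powr (\<alpha> * p) \<le> (a0 * l) powr (\<alpha> * p)"
                by (rule powr_mono2'[OF ap a0l low])
              also have "\<dots> = a0 powr (\<alpha> * p) * l powr (\<alpha> * p)" using a0 l1 by (subst powr_mult) auto
              finally show ?thesis .
            qed
            have b1: "v powr (p - 2) \<le> (x powr \<beta> * x powr \<beta>) * l powr (- \<alpha> * (p - 2)) / D powr (p - 2)"
            proof -
              have "v powr (p - 2) \<le> (s0 / D) powr (p - 2)" using vs0D v1 p by (intro powr_mono2) auto
              also have "\<dots> = s0 powr (p - 2) / D powr (p - 2)" using s0pos D1 by (subst powr_divide) auto
              also have "s0 powr (p - 2) = (x powr (1/p)) powr (p - 2) * (l powr (-\<alpha>)) powr (p - 2)"
                unfolding s0_def using x l1 by (subst powr_mult) auto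
              also have "\<dots> = x powr (1/p * (p - 2)) * l powr (- \<alpha> * (p - 2))"
                by (simp only: powr_powr)
              also have "x powr (1/p * (p - 2)) = x powr \<beta> * x powr \<beta>"
              proof -
                have "1/p * (p - 2) = \<beta> + \<beta>" unfolding \<beta>_def using p by (simp add: field_simps)
                then show ?thesis by (simp only: powr_add)
              qed
              finally show ?thesis .
            qed
            have Dp: "2 * Q * a0 powr (\<alpha> * p) \<le> D powr (p - 2) * D\<^sup>2"
            proof -
              have "1 \<le> D powr (p - 2)" using D1 p by (intro ge_one_powr_ge_zero) auto
              then have "D\<^sup>2 \<le> D powr (p - 2) * D\<^sup>2" using D1 by (simp add: mult_le_cancel_right1)
              then show ?thesis using D_3 DD by linarith
            qed
            have Dpos: "D powr (p - 2) > 0" using D1 by simp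
            have "v powr (p - 2) * ln (c + v) powr (\<alpha> * p)
               \<le> ((x powr \<beta> * x powr \<beta>) * l powr (- \<alpha> * (p - 2)) / D powr (p - 2)) * (a0 powr (\<alpha> * p) * l powr (\<alpha> * p))"
              using b1 b2 by (intro mult_mono) auto
            also have "\<dots> = (a0 powr (\<alpha> * p) / D powr (p - 2)) * ((x powr \<beta> * x powr \<beta>) * l powr (2 * \<alpha>))"
            proof -
              have "l powr (- \<alpha> * (p - 2)) * l powr (\<alpha> * p) = l powr (- \<alpha> * (p - 2) + \<alpha> * p)"
                by (rule powr_add[symmetric])
              also have "- \<alpha> * (p - 2) + \<alpha> * p = 2 * \<alpha>" by (simp add: algebra_simps)
              finally have "l powr (- \<alpha> * (p - 2)) * l powr (\<alpha> * p) = l powr (2 * \<alpha>)" .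
              then show ?thesis by (simp add: field_simps)
            qed
            also have "\<dots> \<le> (D\<^sup>2 / (2 * Q)) * ((x powr \<beta> * x powr \<beta>) * l powr (2 * \<alpha>))"
            proof (rule mult_right_mono)
              show "a0 powr (\<alpha> * p) / D powr (p - 2) \<le> D\<^sup>2 / (2 * Q)"
                using Dp Dpos Q by (simp add: field_simps)
            qed simp
            also have "\<dots> = T / (2 * Q)" unfolding T_def by (simp add: field_simps)
            finally show ?thesis .
          qed
          have "Q * v powr p * ln (c + v) powr (\<alpha> * p) = v\<^sup>2 * (Q * (v powr (p - 2) * ln (c + v) powr (\<alpha> * p)))"
            unfolding e1 by (simp only: mult_ac)
          also have "\<dots> \<le> v\<^sup>2 * (Q * (T / (2 * Q)))"
            using B1 Q by (intro mult_left_mono) auto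
          also have "\<dots> = v\<^sup>2 * (T/2)" using Q by simp
          finally show ?thesis .
        qed
      qed
      also have "\<dots> = v\<^sup>2 * T" by simp
      finally show ?thesis .
    qed
    then show "LlogL_Phi p \<alpha> c v \<le> v\<^sup>2 * (D\<^sup>2 * x powr (1 - 2/p) * ln (exp 1 + x) powr (2*\<alpha>))"
      unfolding l_def[symmetric] Teq .
  qed
qed



lemma CR:
  assumes hyp: "2 < p \<or> (p = 2 \<and> \<alpha> \<ge> 0)" and c: "c > 1"
  shows "\<exists>D\<ge>1. \<forall>x\<ge>1. \<forall>v. 0 \<le> v \<and> v \<le> x powr (1/p) * ln (exp 1 + x) powr (-\<alpha>) / D \<longrightarrow>
     LlogL_Phi p \<alpha> c v \<le> v\<^sup>2 * (D\<^sup>2 * x powr (1 - 2/p) * ln (exp 1 + x) powr (2*\<alpha>))"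
proof (cases "\<alpha> \<ge> 0")
  case True
  then show ?thesis using CR_pos[OF _ True c] hyp by auto
next
  case False
  then show ?thesis using CR_neg[OF _ _ c] hyp by auto
qed

lemma Phi_mono:
  assumes p: "p > 1" and c: "c > 1" and u: "0 \<le> u" "u \<le> v"
  shows "LlogL_Phi p \<alpha> c u \<le> LlogL_Phi p \<alpha> c v"
  using Phi_split[OF p c u] int_phi_nonneg[OF p c u] by simp

lemma Phi_meas:
  assumes p: "p > 1" and c: "c > 1" and f: "f \<in> borel_measurable M" and f0: "\<And>x. f x \<ge> 0"
  shows "(\<lambda>x. LlogL_Phi p \<alpha> c (f x)) \<in> borel_measurable M"
proof -
  define P where "P = (\<lambda>t. LlogL_Phi p \<alpha> c (max 0 t))"
  have "mono P" unfolding P_def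
    by (rule monoI) (intro Phi_mono[OF p c], auto)
  then have "P \<in> borel_measurable borel" by (rule borel_measurable_mono)
  then have "(\<lambda>x. P (f x)) \<in> borel_measurable M" using f by measurable
  moreover have "(\<lambda>x. P (f x)) = (\<lambda>x. LlogL_Phi p \<alpha> c (f x))"
    using f0 by (simp add: P_def max_absorb2)
  ultimately show ?thesis by simp
qed



lemma emeasure_space_MT: "emeasure MT (space MT) = ennreal (2*pi)"
  by (simp add: emeasure_restrict_space emeasure_torus)

lemma emeasure_MT_torus: "emeasure MT torus = ennreal (2*pi)"
  by (simp add: emeasure_restrict_space emeasure_torus)

lemma modular_nonempty:
  assumes young: "young_function (LlogL_Phi p \<alpha> c)" and p: "p > 1" and c: "c > 1"
    and g: "g \<in> orlicz_space (LlogL_Phi p \<alpha> c)"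
  shows "\<exists>lam>0. orlicz_modular (LlogL_Phi p \<alpha> c) g lam \<le> 1"
proof -
  let ?P = "LlogL_Phi p \<alpha> c"
  have meas: "g \<in> borel_measurable MT" using g by (simp add: orlicz_space_def)
  obtain lam0 where lam0: "lam0 > 0" "orlicz_modular ?P g lam0 < \<infinity>"
    using g by (auto simp: orlicz_space_def)
  define R where "R = enn2real (orlicz_modular ?P g lam0)"
  have R: "orlicz_modular ?P g lam0 = ennreal R" "R \<ge> 0"
    using lam0 by (auto simp: R_def)
  define k where "k = max 1 R"
  have k: "k \<ge> 1" "R \<le> k" by (auto simp: k_def)
  have cvx: "convex_on {0..} ?P" using young by (simp add: young_function_def)
  have P0: "?P 0 = 0" by simp
  have pt: "?P (t / k) \<le> ?P t / k" if t: "t \<ge> 0" for t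
  proof -
    have "?P ((1 - 1/k) *\<^sub>R 0 + (1/k) *\<^sub>R t) \<le> (1 - 1/k) * ?P 0 + (1/k) * ?P t"
      by (rule convex_onD[OF cvx]) (use k t in auto)
    then show ?thesis by simp
  qed
  have "orlicz_modular ?P g (k * lam0) = (\<integral>\<^sup>+ x. ennreal (?P (cmod (g x) / lam0 / k)) \<partial>MT)"
    unfolding orlicz_modular_def by (simp add: mult.commute)
  also have "\<dots> \<le> (\<integral>\<^sup>+ x. ennreal (1/k) * ennreal (?P (cmod (g x) / lam0)) \<partial>MT)"
  proof (rule nn_integral_mono)
    fix x
    have "?P (cmod (g x) / lam0 / k) \<le> (1/k) * ?P (cmod (g x) / lam0)"
      using pt[of "cmod (g x) / lam0"] lam0 by simp
    then show "ennreal (?P (cmod (g x) / lam0 / k)) \<le> ennreal (1/k) * ennreal (?P (cmod (g x) / lam0))"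
    proof -
      have "ennreal (1/k) * ennreal (?P (cmod (g x) / lam0)) = ennreal ((1/k) * ?P (cmod (g x) / lam0))"
        by (rule ennreal_mult[symmetric]) (use k Phi_nonneg[OF p c] lam0 in auto)
      then show ?thesis using \<open>?P (cmod (g x) / lam0 / k) \<le> (1/k) * ?P (cmod (g x) / lam0)\<close>
        by (simp add: ennreal_leI)
    qed
  qed
  also have "\<dots> = ennreal (1/k) * orlicz_modular ?P g lam0"
    unfolding orlicz_modular_def
    by (rule nn_integral_cmult) (intro measurable_compose[OF _ measurable_ennreal] Phi_meas[OF p c], use meas lam0 in auto)
  also have "\<dots> = ennreal (R / k)" using R k by (simp add: ennreal_mult[symmetric])
  also have "\<dots> \<le> 1" using k R by simp
  finally show ?thesis using k lam0 by (intro exI[of _ "k * lam0"]) auto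
qed

lemma modular_L2:
  assumes p: "p > 1" and c: "c > 1" and a: "a > 0"
    and LB: "\<And>t. t \<ge> 0 \<Longrightarrow> a * t\<^sup>2 - 4 * a \<le> LlogL_Phi p \<alpha> c t"
    and meas: "g \<in> borel_measurable MT" and lam: "lam > 0"
    and mod1: "orlicz_modular (LlogL_Phi p \<alpha> c) g lam \<le> 1"
  shows "integrable MT (\<lambda>x. (cmod (g x))\<^sup>2)"
    and "(LINT x|MT. (cmod (g x))\<^sup>2) \<le> lam\<^sup>2 * (1/a + 8 * pi)"
proof -
  let ?P = "LlogL_Phi p \<alpha> c"
  have pt: "(cmod (g x))\<^sup>2 \<le> lam\<^sup>2 / a * ?P (cmod (g x) / lam) + 4 * lam\<^sup>2" for x
  proof -
    have "a * (cmod (g x) / lam)\<^sup>2 - 4 * a \<le> ?P (cmod (g x) / lam)" using LB lam by simp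
    then have "(cmod (g x) / lam)\<^sup>2 \<le> ?P (cmod (g x) / lam) / a + 4" using a by (simp add: field_simps)
    then have "lam\<^sup>2 * (cmod (g x) / lam)\<^sup>2 \<le> lam\<^sup>2 * (?P (cmod (g x) / lam) / a + 4)"
      by (intro mult_left_mono) auto
    then show ?thesis using lam by (simp add: field_simps power2_eq_square)
  qed
  have Pm[measurable]: "(\<lambda>x. ennreal (?P (cmod (g x) / lam))) \<in> borel_measurable MT"
    by (intro measurable_compose[OF _ measurable_ennreal] Phi_meas[OF p c]) (use meas lam in auto)
  have "(\<integral>\<^sup>+ x. ennreal ((cmod (g x))\<^sup>2) \<partial>MT)
      \<le> (\<integral>\<^sup>+ x. ennreal (lam\<^sup>2 / a) * ennreal (?P (cmod (g x) / lam)) + ennreal (4 * lam\<^sup>2) \<partial>MT)"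
  proof (rule nn_integral_mono)
    fix x
    show "ennreal ((cmod (g x))\<^sup>2) \<le> ennreal (lam\<^sup>2 / a) * ennreal (?P (cmod (g x) / lam)) + ennreal (4 * lam\<^sup>2)"
      using pt[of x] a lam Phi_nonneg[OF p c, of "cmod (g x) / lam" \<alpha>]
      by (simp add: ennreal_mult[symmetric] ennreal_plus[symmetric] del: ennreal_plus)
  qed
  also have "\<dots> = ennreal (lam\<^sup>2 / a) * orlicz_modular ?P g lam + ennreal (4 * lam\<^sup>2) * ennreal (2 * pi)"
    unfolding orlicz_modular_def
    by (subst nn_integral_add) (measurable, simp add: nn_integral_cmult emeasure_MT_torus)
  also have "\<dots> \<le> ennreal (lam\<^sup>2 / a) * 1 + ennreal (4 * lam\<^sup>2) * ennreal (2 * pi)"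
    by (intro add_mono mult_left_mono mod1) auto
  also have "\<dots> = ennreal (lam\<^sup>2 * (1/a + 8 * pi))"
    using a lam by (simp add: ennreal_mult[symmetric] ennreal_plus[symmetric] field_simps del: ennreal_plus)
  finally have fin: "(\<integral>\<^sup>+ x. ennreal ((cmod (g x))\<^sup>2) \<partial>MT) \<le> ennreal (lam\<^sup>2 * (1/a + 8 * pi))" .
  show int: "integrable MT (\<lambda>x. (cmod (g x))\<^sup>2)"
  proof (rule integrableI_bounded)
    show "(\<lambda>x. (cmod (g x))\<^sup>2) \<in> borel_measurable MT" using meas by measurable
    show "(\<integral>\<^sup>+ x. ennreal (norm ((cmod (g x))\<^sup>2)) \<partial>MT) < \<infinity>"
      using fin by (simp add: le_less_trans)
  qed
  have "ennreal (LINT x|MT. (cmod (g x))\<^sup>2) = (\<integral>\<^sup>+ x. ennreal ((cmod (g x))\<^sup>2) \<partial>MT)"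
    by (rule nn_integral_eq_integral[OF int, symmetric]) auto
  with fin have "ennreal (LINT x|MT. (cmod (g x))\<^sup>2) \<le> ennreal (lam\<^sup>2 * (1/a + 8 * pi))" by simp
  then show "(LINT x|MT. (cmod (g x))\<^sup>2) \<le> lam\<^sup>2 * (1/a + 8 * pi)"
    using a by (subst (asm) ennreal_le_iff) (auto intro!: mult_nonneg_nonneg add_nonneg_nonneg)
qed



lemma powr_sq: "(y::real) > 0 \<Longrightarrow> (y powr r)\<^sup>2 = y powr (2 * r)"
  by (simp add: power2_eq_square powr_add[symmetric])

lemma lux_le:
  assumes "lam > 0" "orlicz_modular P f lam \<le> 1"
  shows "luxemburg_norm P f \<le> lam"
  unfolding luxemburg_norm_def
  by (rule cInf_lower) (use assms in \<open>auto intro: bdd_belowI[of _ 0]\<close>)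

theorem lemma5p4:
  fixes p \<alpha> c :: real
  assumes "2 < p \<or> (p = 2 \<and> \<alpha> \<ge> 0)"
    and "c > 1"
    and "young_function (LlogL_Phi p \<alpha> c)"
  shows "\<exists>C>0. \<forall>N::nat. N \<ge> 1 \<longrightarrow>
     (\<forall>A::int set. finite A \<and> card A \<le> N \<longrightarrow>
       (\<forall>g\<in>orlicz_space (LlogL_Phi p \<alpha> c).
          luxemburg_norm (LlogL_Phi p \<alpha> c) (fourier_proj A g)
            \<le> C * real N powr (1/2 - 1/p) * (ln (exp 1 + real N)) powr \<alpha>
                * luxemburg_norm (LlogL_Phi p \<alpha> c) g))"
proof -
  note hyp = assms(1) and c = assms(2) and young = assms(3)
  let ?P = "LlogL_Phi p \<alpha> c"
  have p1: "p > 1" using hyp by auto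
  obtain a where a: "a > 0" "\<And>t. t \<ge> 0 \<Longrightarrow> a * t\<^sup>2 - 4 * a \<le> ?P t"
    using Phi_quad_lb[OF hyp c] by auto
  obtain D where D1: "D \<ge> 1" and CRD: "\<And>x v. x \<ge> 1 \<Longrightarrow> 0 \<le> v \<Longrightarrow> v \<le> x powr (1/p) * ln (exp 1 + x) powr (-\<alpha>) / D \<Longrightarrow>
     ?P v \<le> v\<^sup>2 * (D\<^sup>2 * x powr (1 - 2/p) * ln (exp 1 + x) powr (2*\<alpha>))"
    using CR[OF hyp c] by blast
  define K0 where "K0 = max 1 (1/a + 8 * pi)"
  have K0: "K0 \<ge> 1" "1/a + 8 * pi \<le> K0" by (auto simp: K0_def)
  define C where "C = sqrt K0 * D"
  have Cpos: "C > 0" using K0 D1 by (simp add: C_def)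
  show ?thesis
  proof (intro exI[of _ C] conjI allI impI ballI, fact Cpos)
    fix N :: nat and A :: "int set" and g
    assume N: "N \<ge> 1" and A: "finite A \<and> card A \<le> N" and g: "g \<in> orlicz_space ?P"
    define x where "x = real N"
    have x1: "x \<ge> 1" using N by (simp add: x_def)
    define l where "l = ln (exp 1 + x)"
    have l1: "l \<ge> 1" unfolding l_def using x1 by (intro ell_ge1) simp
    define B where "B = C * x powr (1/2 - 1/p) * l powr \<alpha>"
    have Bpos: "B > 0" using Cpos x1 l1 by (simp add: B_def)
    have meas: "g \<in> borel_measurable MT" using g by (simp add: orlicz_space_def)
    define S where "S = {lam. lam > 0 \<and> orlicz_modular ?P g lam \<le> 1}"
    have Sne: "S \<noteq> {}" using modular_nonempty[OF young p1 c g] by (auto simp: S_def)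
    have Sbdd: "bdd_below S" by (rule bdd_belowI[of _ 0]) (auto simp: S_def)
    have Ldef: "luxemburg_norm ?P g = Inf S" by (simp add: luxemburg_norm_def S_def)
    have L0: "0 \<le> Inf S" by (rule cInf_greatest[OF Sne]) (auto simp: S_def)
    have main: "luxemburg_norm ?P (fourier_proj A g) \<le> B * (Inf S + e)" if e: "e > 0" for e
    proof -
      define Lg where "Lg = Inf S + e"
      have Lg: "Lg > 0" using L0 e by (simp add: Lg_def)
      obtain lam where lam: "lam \<in> S" "lam < Lg"
        using cInf_less_iff[OF Sne Sbdd, of Lg] e by (auto simp: Lg_def)
      have lam0: "lam > 0" and mod1: "orlicz_modular ?P g lam \<le> 1" using lam by (auto simp: S_def)
      have sq: "integrable MT (\<lambda>x. (cmod (g x))\<^sup>2)"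
        and sqb: "(LINT x|MT. (cmod (g x))\<^sup>2) \<le> lam\<^sup>2 * (1/a + 8 * pi)"
        using modular_L2[OF p1 c a(1) a(2) meas lam0 mod1] by auto
      have G: "(LINT x|MT. (cmod (g x))\<^sup>2) \<le> K0 * Lg\<^sup>2"
      proof -
        have "lam\<^sup>2 \<le> Lg\<^sup>2" using lam lam0 by (intro power_mono) auto
        then have "lam\<^sup>2 * (1/a + 8 * pi) \<le> Lg\<^sup>2 * K0"
          using K0 a by (intro mult_mono) auto
        then show ?thesis using sqb by (simp add: mult.commute)
      qed
      define s where "s = (\<Sum>n\<in>A. (cmod (fourier_coeff g n))\<^sup>2)"
      have s0: "s \<ge> 0" by (simp add: s_def sum_nonneg)
      have bes: "2 * pi * s \<le> K0 * Lg\<^sup>2"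
        using bessel[OF meas sq, of A] A G by (simp add: s_def)
      have sK: "s \<le> K0 * Lg\<^sup>2"
      proof -
        have "1 * s \<le> (2 * pi) * s" using s0 pi_gt3 by (intro mult_right_mono) auto
        then show ?thesis using bes by simp
      qed
      define T where "T = fourier_proj A g"
      have T_eq: "T y = (\<Sum>n\<in>A. fourier_coeff g n * ee n y)" for y
        by (simp add: T_def fourier_proj_ee)
      have Tbound: "cmod (T y) \<le> sqrt x * sqrt K0 * Lg" for y
      proof -
        have "cmod (T y) \<le> sqrt (real (card A) * s)" unfolding T_eq s_def using A by (intro proj_sup) auto
        also have "\<dots> \<le> sqrt (x * (K0 * Lg\<^sup>2))"
          using A sK s0 x_def by (intro real_sqrt_le_mono mult_mono) auto
        also have "\<dots> = sqrt x * sqrt K0 * Lg" using Lg by (simp add: real_sqrt_mult)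
        finally show ?thesis .
      qed
      define lamT where "lamT = B * Lg"
      have lamT: "lamT > 0" using Bpos Lg by (simp add: lamT_def)
      define Qc where "Qc = D\<^sup>2 * x powr (1 - 2/p) * l powr (2*\<alpha>)"
      have Qc: "Qc \<ge> 0" by (simp add: Qc_def)
      have lamT2: "lamT\<^sup>2 = K0 * Qc * Lg\<^sup>2"
      proof -
        have "lamT\<^sup>2 = (sqrt K0)\<^sup>2 * D\<^sup>2 * (x powr (1/2 - 1/p))\<^sup>2 * (l powr \<alpha>)\<^sup>2 * Lg\<^sup>2"
          by (simp add: lamT_def B_def C_def power_mult_distrib)
        also have "\<dots> = K0 * D\<^sup>2 * x powr (1 - 2/p) * l powr (2*\<alpha>) * Lg\<^sup>2"
          using K0 x1 l1 by (simp add: powr_sq algebra_simps)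
        finally show ?thesis by (simp add: Qc_def mult_ac)
      qed
      have ptw: "?P (cmod (T y) / lamT) \<le> Qc / lamT\<^sup>2 * (cmod (T y))\<^sup>2" for y
      proof -
        define v where "v = cmod (T y) / lamT"
        have v0: "0 \<le> v" using lamT by (simp add: v_def)
        have "v \<le> sqrt x * sqrt K0 * Lg / lamT"
          unfolding v_def using Tbound[of y] lamT by (simp add: divide_right_mono)
        also have "\<dots> = x powr (1/p) * l powr (-\<alpha>) / D"
        proof -
          have sx: "sqrt x = x powr (1/2 - 1/p) * x powr (1/p)"
            using x1 by (simp add: powr_add[symmetric] powr_half_sqrt)
          have "l powr \<alpha> * l powr (-\<alpha>) = 1" using l1 by (simp add: powr_add[symmetric])
          then show ?thesis unfolding lamT_def B_def C_def sx using K0 D1 x1 l1 Lg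
            by (simp add: field_simps)
        qed
        finally have "v \<le> x powr (1/p) * l powr (-\<alpha>) / D" .
        then have "?P v \<le> v\<^sup>2 * Qc" using CRD[OF x1 v0] by (simp add: Qc_def l_def)
        then show ?thesis using lamT by (simp add: v_def power_divide field_simps)
      qed
      have iT: "integrable MT (\<lambda>y. (cmod (T y))\<^sup>2)" and IT: "(LINT y|MT. (cmod (T y))\<^sup>2) = 2 * pi * s"
        unfolding T_eq s_def using trig_L2 A by auto
      have "orlicz_modular ?P T lamT \<le> (\<integral>\<^sup>+ y. ennreal (Qc / lamT\<^sup>2 * (cmod (T y))\<^sup>2) \<partial>MT)"
        unfolding orlicz_modular_def by (intro nn_integral_mono ennreal_leI ptw)
      also have "\<dots> = ennreal (LINT y|MT. Qc / lamT\<^sup>2 * (cmod (T y))\<^sup>2)"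
        by (rule nn_integral_eq_integral) (use iT Qc in auto)
      also have "\<dots> = ennreal (Qc / lamT\<^sup>2 * (2 * pi * s))" using IT by simp
      also have "\<dots> \<le> 1"
      proof -
        have "Qc / lamT\<^sup>2 * (2 * pi * s) \<le> Qc / lamT\<^sup>2 * (K0 * Lg\<^sup>2)"
          using bes Qc by (intro mult_left_mono) auto
        also have "\<dots> \<le> 1"
        proof (cases "Qc = 0")
          case True then show ?thesis by simp
        next
          case False
          then show ?thesis using lamT2 lamT K0 Lg Qc by (simp add: field_simps)
        qed
        finally show ?thesis by simp
      qed
      finally have "luxemburg_norm ?P T \<le> lamT" by (intro lux_le lamT)
      then show ?thesis by (simp add: T_def lamT_def Lg_def)
    qed
    have "luxemburg_norm ?P (fourier_proj A g) \<le> B * Inf S"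
    proof (rule field_le_epsilon)
      fix e :: real assume e: "e > 0"
      have "luxemburg_norm ?P (fourier_proj A g) \<le> B * (Inf S + e / B)"
        using main[of "e / B"] e Bpos by simp
      also have "\<dots> = B * Inf S + e" using Bpos by (simp add: field_simps)
      finally show "luxemburg_norm ?P (fourier_proj A g) \<le> B * Inf S + e" .
    qed
    then show "luxemburg_norm ?P (fourier_proj A g)
            \<le> C * real N powr (1/2 - 1/p) * (ln (exp 1 + real N)) powr \<alpha> * luxemburg_norm ?P g"
      by (simp add: B_def x_def l_def Ldef)
  qed
qed

end
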